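(* Work in the Gödel POMDP described in the context, with a fixed known utility $U$, finite known budget $B$, and the convention that ties are broken in favour of the parent. For every policy $\pi$ (with scoring function $Score_\pi$) and every state $s=(\mathcal{T},a_p,a_c,b)$ with $b>0$, the rule "accept (choose $a_c$) if $\mathrm{CMP}_\pi(s,a_c)>\mathrm{CMP}_\pi(s,a_p)$, otherwise reject (choose $a_p$)" makes the same choice as the Gödel Machine rule "accept iff $Q_\pi(s,a_c)>Q_\pi(s,a_p)$". Consequently, if $\pi^*$ is an optimal policy of the Gödel POMDP, the policy that at every state with $b>0$ chooses $\arg\max_{a\in\{a_p,a_c\}}\mathrm{CMP}_{\pi^*}(s,a)$ (ties to $a_p$), with final scoring function $Score_{\pi^*}$, is optimal; i.e. access to the $\mathrm{CMP}$ oracle suffices to implement the Gödel Machine in this setting.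
   Context: Agents are nodes of a rooted tree; for a tree $\mathcal{T}$ and node $a\in\mathcal{T}$, the clade $C(\mathcal{T},a)$ is the subtree of $\mathcal{T}$ rooted at $a$ (i.e. $a$ and all its descendants). A fixed utility function $U$ assigns to each agent a real number (its expected performance on evaluation tasks, assumed independent of time and history, i.e. repeatable trials); $U$ is known. Each agent $a$ has a (stochastic) self-modification operation producing a new agent $m(a)$, which is added to the tree as a child of $a$; each self-modification costs exactly one unit of budget, and nothing else consumes budget; no reward is received before termination. Gödel POMDP. States are tuples $(\mathcal{T},a_p,a_c,b)$ where $\mathcal{T}$ is a finite tree of agents, $a_p,a_c\in\mathcal{T}$ with $a_c$ a child of $a_p$ (the "parent" and "child"), and $b\in\mathbb{Z}_{\ge 0}$ is the remaining budget. The observation is $(a_p,a_c,b)$. When $b>0$ the action is a choice $a\in\{a_p,a_c\}$ ("reject" $=a_p$, "accept" $=a_c$), and the transition is $(\mathcal{T},a_p,a_c,b)\mapsto(\mathcal{T}\cup\{m(a)\},a,m(a),b-1)$. A policy $\pi$ consists of a (history-dependent) action rule together with a scoring function $Score_\pi$ which, given the final observation $(a_{Bp},a_{Bc},0)$, returns an indicator function on agents equal to $1$ on exactly one of $a_{Bp},a_{Bc}$ and $0$ elsewhere; the final agent is $\arg\max_{a'}Score_\pi(a_{Bp},a_{Bc})(a')$ and the terminal reward is $U$ of that agent. Let $p_\pi(\cdot\mid s,a)$ denote the distribution of the terminal state $(\mathcal{T}_B,a_{Bp},a_{Bc},0)$ obtained by taking action $a$ in state $s$ and following $\pi$ thereafter.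 $Q_\pi(s,a)=\mathbb{E}_{(\mathcal{T}_B,a_{Bp},a_{Bc},0)\sim p_\pi(\cdot\mid s,a)}\big[U(\arg\max_{a'\in\mathcal{T}_B}Score_\pi(a_{Bp},a_{Bc})(a'))\big]$. Clade-metaproductivity: $\mathrm{CMP}_\pi(s,a)=\mathbb{E}_{(\mathcal{T}_B,a_{Bp},a_{Bc},0)\sim p_\pi(\cdot\mid s,a)}\big[U(\arg\max_{a'\in C(\mathcal{T}_B,a)}Score_\pi(a_{Bp},a_{Bc})(a'))\big]$. *)

theory Defs
  imports "HOL-Probability.Probability"
begin

text \<open>
A tree is a list of nodes; node i carries the
agent (label) fst (T!i) and its parent index snd (T!i) (None for the root).
\<close>

type_synonym 'ag tree = "('ag \<times> nat option) list"

text \<open>States (T, a_p, a_c, b): tree, parent node, child node, remaining budget.\<close>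
type_synonym 'ag state = "'ag tree \<times> nat \<times> nat \<times> nat"

type_synonym 'ag obs = "'ag \<times> 'ag \<times> nat"

text \<open>Histories: past observations together with the action taken (True = accept).\<close>
type_synonym 'ag hist = "('ag obs \<times> bool) list"

definition wf_tree :: "'ag tree \<Rightarrow> bool" where
  "wf_tree T \<longleftrightarrow> T \<noteq> [] \<and> snd (T ! 0) = None \<and>
     (\<forall>i. 0 < i \<and> i < length T \<longrightarrow> (\<exists>j<i. snd (T ! i) = Some j))"

definition valid_state :: "'ag state \<Rightarrow> bool" where
  "valid_state s = (case s of (T, p, c, b) \<Rightarrow>
     wf_tree T \<and> p < length T \<and> c < length T \<and> snd (T ! c) = Some p)"

definition nodes :: "'ag tree \<Rightarrow> nat set" where
  "nodes T = {..<length T}"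

definition parent_rel :: "'ag tree \<Rightarrow> (nat \<times> nat) set" where
  "parent_rel T = {(j, i). j < length T \<and> snd (T ! j) = Some i}"

definition clade :: "'ag tree \<Rightarrow> nat \<Rightarrow> nat set" where
  "clade T a = {j. j < length T \<and> (j, a) \<in> (parent_rel T)\<^sup>*}"

definition budget :: "'ag state \<Rightarrow> nat" where
  "budget s = snd (snd (snd s))"

definition obs :: "'ag state \<Rightarrow> 'ag obs" where
  "obs s = (case s of (T, p, c, b) \<Rightarrow> (fst (T ! p), fst (T ! c), b))"

definition act_node :: "'ag state \<Rightarrow> bool \<Rightarrow> nat" where
  "act_node s acc = (case s of (T, p, c, b) \<Rightarrow> if acc then c else p)"

definition step :: "('ag \<Rightarrow> 'ag pmf) \<Rightarrow> 'ag state \<Rightarrow> bool \<Rightarrow> 'ag state pmf" where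
  "step m s acc = (case s of (T, p, c, b) \<Rightarrow>
     (let a = (if acc then c else p) in
      map_pmf (\<lambda>x. (T @ [(x, Some a)], a, length T, b - 1)) (m (fst (T ! a)))))"

primrec runF :: "nat \<Rightarrow> ('ag hist \<Rightarrow> 'ag state \<Rightarrow> bool) \<Rightarrow> ('ag \<Rightarrow> 'ag pmf)
    \<Rightarrow> 'ag hist \<Rightarrow> 'ag state \<Rightarrow> bool \<Rightarrow> 'ag state pmf" where
  "runF 0 rule m h s acc = return_pmf s"
| "runF (Suc n) rule m h s acc =
     bind_pmf (step m s acc)
       (\<lambda>s'. runF n rule m (h @ [(obs s, acc)]) s' (rule (h @ [(obs s, acc)]) s'))"

definition terminal :: "('ag hist \<Rightarrow> 'ag state \<Rightarrow> bool) \<Rightarrow> ('ag \<Rightarrow> 'ag pmf)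
    \<Rightarrow> 'ag hist \<Rightarrow> 'ag state \<Rightarrow> bool \<Rightarrow> 'ag state pmf" where
  "terminal rule m h s acc = runF (budget s) rule m h s acc"

definition obs_rule :: "('ag hist \<Rightarrow> 'ag obs \<Rightarrow> bool) \<Rightarrow> 'ag hist \<Rightarrow> 'ag state \<Rightarrow> bool" where
  "obs_rule act h s = act h (obs s)"

text \<open>Scoring function: sc a_Bp a_Bc = True means the indicator is 1 on a_Bc, otherwise on a_Bp.\<close>
definition score_ind :: "('ag \<Rightarrow> 'ag \<Rightarrow> bool) \<Rightarrow> 'ag state \<Rightarrow> nat \<Rightarrow> real" where
  "score_ind sc s = (case s of (T, p, c, b) \<Rightarrow>
     (\<lambda>x. if x = (if sc (fst (T ! p)) (fst (T ! c)) then c else p) then 1 else 0))"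

definition argmax_on :: "(nat \<Rightarrow> real) \<Rightarrow> nat set \<Rightarrow> nat" where
  "argmax_on f S = (SOME x. x \<in> S \<and> (\<forall>y\<in>S. f y \<le> f x))"

definition tree_of :: "'ag state \<Rightarrow> 'ag tree" where
  "tree_of s = fst s"

definition Qv :: "('ag \<Rightarrow> real) \<Rightarrow> ('ag \<Rightarrow> 'ag pmf) \<Rightarrow> ('ag hist \<Rightarrow> 'ag state \<Rightarrow> bool)
    \<Rightarrow> ('ag \<Rightarrow> 'ag \<Rightarrow> bool) \<Rightarrow> 'ag hist \<Rightarrow> 'ag state \<Rightarrow> bool \<Rightarrow> real" where
  "Qv U m rule sc h s acc = measure_pmf.expectation (terminal rule m h s acc)
     (\<lambda>sB. U (fst (tree_of sB ! argmax_on (score_ind sc sB) (nodes (tree_of sB)))))"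

definition CMP :: "('ag \<Rightarrow> real) \<Rightarrow> ('ag \<Rightarrow> 'ag pmf) \<Rightarrow> ('ag hist \<Rightarrow> 'ag state \<Rightarrow> bool)
    \<Rightarrow> ('ag \<Rightarrow> 'ag \<Rightarrow> bool) \<Rightarrow> 'ag hist \<Rightarrow> 'ag state \<Rightarrow> bool \<Rightarrow> real" where
  "CMP U m rule sc h s acc = measure_pmf.expectation (terminal rule m h s acc)
     (\<lambda>sB. U (fst (tree_of sB ! argmax_on (score_ind sc sB) (clade (tree_of sB) (act_node s acc)))))"

definition policy_value :: "('ag \<Rightarrow> real) \<Rightarrow> ('ag \<Rightarrow> 'ag pmf) \<Rightarrow> ('ag hist \<Rightarrow> 'ag state \<Rightarrow> bool)
    \<Rightarrow> ('ag \<Rightarrow> 'ag \<Rightarrow> bool) \<Rightarrow> 'ag state \<Rightarrow> real" where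
  "policy_value U m rule sc s0 = Qv U m rule sc [] s0 (rule [] s0)"

definition cmp_rule :: "('ag \<Rightarrow> real) \<Rightarrow> ('ag \<Rightarrow> 'ag pmf) \<Rightarrow> ('ag hist \<Rightarrow> 'ag state \<Rightarrow> bool)
    \<Rightarrow> ('ag \<Rightarrow> 'ag \<Rightarrow> bool) \<Rightarrow> 'ag hist \<Rightarrow> 'ag state \<Rightarrow> bool" where
  "cmp_rule U m rule sc h s = (CMP U m rule sc h s True > CMP U m rule sc h s False)"

end

theory Submission imports Defs begin
lemma integral_bind_pmf_bdd:
  fixes f :: "'b \<Rightarrow> real"
  assumes "\<And>x. \<bar>f x\<bar> \<le> B"
  shows "measure_pmf.expectation (bind_pmf M N) f = measure_pmf.expectation M (\<lambda>x. measure_pmf.expectation (N x) f)"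
  unfolding measure_pmf_bind
  apply (rule integral_bind[where K="count_space UNIV" and B=B and B'=1])
  using measurable_measure_pmf[of N] assms
  by (auto simp: measure_pmf.emeasure_space_1 measure_pmf.finite_measure_axioms)

lemma pmf_integrable_bdd:
  fixes f :: "'b \<Rightarrow> real"
  assumes "\<And>x. \<bar>f x\<bar> \<le> B"
  shows "integrable (measure_pmf M) f"
  by (rule measure_pmf.integrable_const_bound[where B=B]) (use assms in auto)

lemma clade_mono: "j \<in> clade T a \<Longrightarrow> j \<in> clade (T @ [x]) a"
proof -
  have "parent_rel T \<subseteq> parent_rel (T @ [x])"
    by (auto simp: parent_rel_def nth_append)
  then show "j \<in> clade T a \<Longrightarrow> j \<in> clade (T @ [x]) a"
    unfolding clade_def using rtrancl_mono by auto
qed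

lemma clade_self: "a < length T \<Longrightarrow> a \<in> clade T a"
  by (simp add: clade_def)

lemma clade_new: "a' \<in> clade T a \<Longrightarrow> length T \<in> clade (T @ [(x, Some a')]) a"
proof -
  assume h: "a' \<in> clade T a"
  then have "a' \<in> clade (T @ [(x, Some a')]) a" by (rule clade_mono)
  moreover have "(length T, a') \<in> parent_rel (T @ [(x, Some a')])"
    by (simp add: parent_rel_def)
  ultimately show ?thesis unfolding clade_def
    by (auto intro: converse_rtrancl_into_rtrancl)
qed

definition inC :: "nat \<Rightarrow> 'ag state \<Rightarrow> bool" where
  "inC a s = (case s of (T, p, c, b) \<Rightarrow> p \<in> clade T a \<and> c \<in> clade T a)"

definition inv :: "'ag state \<Rightarrow> bool" where
  "inv s = (case s of (T, p, c, b) \<Rightarrow> p < length T \<and> c < length T)"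

lemma step_inC:
  assumes "inC a s" "s' \<in> set_pmf (step m s acc)"
  shows "inC a s'"
  using assms
  by (cases s) (auto simp: inC_def step_def Let_def clade_mono clade_new split: if_splits)

lemma step_inC0:
  assumes "inv s" "s' \<in> set_pmf (step m s acc)"
  shows "inC (act_node s acc) s'"
  using assms
  by (cases s) (auto simp: inv_def inC_def act_node_def step_def Let_def clade_mono clade_new clade_self split: if_splits)

lemma step_inv:
  assumes "inv s" "s' \<in> set_pmf (step m s acc)"
  shows "inv s' \<and> budget s' = budget s - 1"
  using assms
  by (cases s) (auto simp: inv_def budget_def step_def Let_def split: if_splits)

lemma runF_inC:
  "inC a s \<Longrightarrow> sB \<in> set_pmf (runF n r m h s acc) \<Longrightarrow> inC a sB"
proof (induction n arbitrary: h s acc)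
  case 0 then show ?case by simp
next
  case (Suc n)
  then show ?case by (auto dest: step_inC)
qed

lemma runF_inC_Suc:
  "inv s \<Longrightarrow> sB \<in> set_pmf (runF (Suc n) r m h s acc) \<Longrightarrow> inC (act_node s acc) sB"
  by (auto intro: runF_inC dest: step_inC0)

lemma clade_sub: "clade T a \<subseteq> nodes T"
  by (auto simp: clade_def nodes_def)

lemma argmax_ind:
  assumes "x \<in> S"
  shows "argmax_on (\<lambda>z. if z = x then (1::real) else 0) S = x"
  unfolding argmax_on_def
  by (rule some_equality) (use assms in \<open>auto split: if_splits\<close>)

lemma CMP_eq_Qv:
  assumes "inv s" "budget s > 0"
  shows "CMP U m r sc h s acc = Qv U m r sc h s acc"
proof -
  obtain n where n: "budget s = Suc n" using assms(2) by (cases "budget s") auto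
  have "\<And>sB. sB \<in> set_pmf (terminal r m h s acc) \<Longrightarrow>
     U (fst (tree_of sB ! argmax_on (score_ind sc sB) (clade (tree_of sB) (act_node s acc))))
   = U (fst (tree_of sB ! argmax_on (score_ind sc sB) (nodes (tree_of sB))))"
  proof -
    fix sB assume "sB \<in> set_pmf (terminal r m h s acc)"
    then have "inC (act_node s acc) sB" unfolding terminal_def n
      using runF_inC_Suc[OF assms(1)] by blast
    then show "?thesis sB"
      using clade_sub[of "fst sB" "act_node s acc"]
      by (cases sB) (auto simp: inC_def score_ind_def tree_of_def argmax_ind)
  qed
  then show ?thesis unfolding CMP_def Qv_def
    by (intro integral_cong_AE) (auto simp: AE_measure_pmf_iff)
qed

definition Fv :: "('ag \<Rightarrow> real) \<Rightarrow> ('ag \<Rightarrow> 'ag \<Rightarrow> bool) \<Rightarrow> 'ag state \<Rightarrow> real" where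
  "Fv U sc sB = U (fst (tree_of sB ! argmax_on (score_ind sc sB) (nodes (tree_of sB))))"

definition Qn where
  "Qn U m r sc n h s acc = measure_pmf.expectation (runF n r m h s acc) (Fv U sc)"

lemma Qv_Qn: "Qv U m r sc h s acc = Qn U m r sc (budget s) h s acc"
proof -
  have "Fv U sc = (\<lambda>sB. U (fst (tree_of sB ! argmax_on (score_ind sc sB) (nodes (tree_of sB)))))"
    by (rule ext) (simp add: Fv_def)
  then show ?thesis by (simp add: Qv_def Qn_def terminal_def)
qed

lemma exp_bdd:
  fixes f :: "'b \<Rightarrow> real"
  assumes "\<And>x. \<bar>f x\<bar> \<le> B"
  shows "\<bar>measure_pmf.expectation M f\<bar> \<le> B"
proof -
  have B0: "0 \<le> B" using assms[of undefined] by linarith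
  have "\<bar>measure_pmf.expectation M f\<bar> \<le> measure_pmf.expectation M (\<lambda>x. \<bar>f x\<bar>)"
    by (rule integral_abs_bound)
  also have "\<dots> \<le> measure_pmf.expectation M (\<lambda>x. B)"
    by (intro integral_mono pmf_integrable_bdd[where B=B]) (use assms B0 in auto)
  also have "\<dots> = B" by simp
  finally show ?thesis .
qed

lemma Qn_bdd:
  assumes "\<And>x. \<bar>U x\<bar> \<le> B"
  shows "\<bar>Qn U m r sc n h s acc\<bar> \<le> B"
  unfolding Qn_def by (rule exp_bdd) (simp add: Fv_def assms)

lemma Qn_Suc:
  assumes "\<And>x. \<bar>U x\<bar> \<le> B"
  shows "Qn U m r sc (Suc n) h s acc = measure_pmf.expectation (step m s acc)
     (\<lambda>s'. Qn U m r sc n (h @ [(obs s, acc)]) s' (r (h @ [(obs s, acc)]) s'))"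
  unfolding Qn_def runF.simps
  by (rule integral_bind_pmf_bdd[where B=B]) (simp add: Fv_def assms)

lemma Qn_0: "Qn U m r sc 0 h s acc = Fv U sc s"
  by (simp add: Qn_def)

lemma greedy:
  assumes "inv s" "budget s = n"
  shows "Qn U m r sc n h s acc \<le> Qn U m r sc n h s (cmp_rule U m r sc h s)"
proof (cases n)
  case 0 then show ?thesis by (simp add: Qn_0)
next
  case (Suc k)
  then have "budget s > 0" using assms by simp
  then have "CMP U m r sc h s b = Qn U m r sc n h s b" for b
    using CMP_eq_Qv[OF assms(1)] Qv_Qn assms(2) by metis
  then show ?thesis unfolding cmp_rule_def
    by (cases acc; cases "Qn U m r sc n h s False < Qn U m r sc n h s True") auto
qed

lemma improve:
  assumes "\<And>x. \<bar>U x\<bar> \<le> B"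
  shows "inv s \<Longrightarrow> budget s = n \<Longrightarrow>
    Qn U m r sc n h s acc \<le> Qn U m (cmp_rule U m r sc) sc n h s acc"
proof (induction n arbitrary: h s acc)
  case 0 then show ?case by (simp add: Qn_0)
next
  case (Suc n)
  let ?h = "h @ [(obs s, acc)]"
  let ?g = "cmp_rule U m r sc"
  have "Qn U m r sc (Suc n) h s acc = measure_pmf.expectation (step m s acc)
     (\<lambda>s'. Qn U m r sc n ?h s' (r ?h s'))" by (rule Qn_Suc[OF assms])
  also have "\<dots> \<le> measure_pmf.expectation (step m s acc)
     (\<lambda>s'. Qn U m ?g sc n ?h s' (?g ?h s'))"
  proof (rule integral_mono_AE)
    show "integrable (measure_pmf (step m s acc)) (\<lambda>s'. Qn U m r sc n ?h s' (r ?h s'))"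
      by (rule pmf_integrable_bdd[where B=B]) (rule Qn_bdd[OF assms])
    show "integrable (measure_pmf (step m s acc)) (\<lambda>s'. Qn U m ?g sc n ?h s' (?g ?h s'))"
      by (rule pmf_integrable_bdd[where B=B]) (rule Qn_bdd[OF assms])
    show "AE s' in measure_pmf (step m s acc). Qn U m r sc n ?h s' (r ?h s') \<le> Qn U m ?g sc n ?h s' (?g ?h s')"
    proof (subst AE_measure_pmf_iff, intro ballI)
      fix s' assume s': "s' \<in> set_pmf (step m s acc)"
      then have i: "inv s'" "budget s' = n" using step_inv[OF Suc.prems(1) s'] Suc.prems(2) by auto
      have "Qn U m r sc n ?h s' (r ?h s') \<le> Qn U m r sc n ?h s' (?g ?h s')"
        by (rule greedy[OF i])
      also have "\<dots> \<le> Qn U m ?g sc n ?h s' (?g ?h s')"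
        by (rule Suc.IH[OF i])
      finally show "Qn U m r sc n ?h s' (r ?h s') \<le> Qn U m ?g sc n ?h s' (?g ?h s')" .
    qed
  qed
  also have "\<dots> = Qn U m ?g sc (Suc n) h s acc" by (rule Qn_Suc[OF assms, symmetric])
  finally show ?case .
qed

theorem theorem1:
  fixes U :: "'ag \<Rightarrow> real" and m :: "'ag \<Rightarrow> 'ag pmf" and s0 :: "'ag state"
    and act_opt :: "'ag hist \<Rightarrow> 'ag obs \<Rightarrow> bool" and sc_opt :: "'ag \<Rightarrow> 'ag \<Rightarrow> bool"
  assumes bounded_U: "bounded (range U)"
    and valid0: "valid_state s0"
    and optimal: "\<And>act sc. policy_value U m (obs_rule act) sc s0
                              \<le> policy_value U m (obs_rule act_opt) sc_opt s0"
  shows "(\<forall>act sc h s. valid_state s \<and> budget s > 0 \<longrightarrow>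
            (CMP U m (obs_rule act) sc h s True > CMP U m (obs_rule act) sc h s False
             \<longleftrightarrow> Qv U m (obs_rule act) sc h s True > Qv U m (obs_rule act) sc h s False))
       \<and> (\<forall>act sc. policy_value U m (obs_rule act) sc s0
            \<le> policy_value U m (cmp_rule U m (obs_rule act_opt) sc_opt) sc_opt s0)"
proof
  have vi: "valid_state s \<Longrightarrow> inv s" for s :: "'ag state"
    by (cases s) (auto simp: valid_state_def inv_def)
  show "\<forall>act sc h s. valid_state s \<and> budget s > 0 \<longrightarrow>
            (CMP U m (obs_rule act) sc h s True > CMP U m (obs_rule act) sc h s False
             \<longleftrightarrow> Qv U m (obs_rule act) sc h s True > Qv U m (obs_rule act) sc h s False)"
    using CMP_eq_Qv vi by metis
  obtain B where B: "\<And>x. \<bar>U x\<bar> \<le> B"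
    using bounded_U unfolding bounded_iff by auto
  let ?r = "obs_rule act_opt"
  let ?g = "cmp_rule U m ?r sc_opt"
  have i0: "inv s0" by (rule vi[OF valid0])
  have "policy_value U m ?r sc_opt s0 = Qn U m ?r sc_opt (budget s0) [] s0 (?r [] s0)"
    by (simp add: policy_value_def Qv_Qn)
  also have "\<dots> \<le> Qn U m ?r sc_opt (budget s0) [] s0 (?g [] s0)"
    by (rule greedy[OF i0 refl])
  also have "\<dots> \<le> Qn U m ?g sc_opt (budget s0) [] s0 (?g [] s0)"
    by (rule improve[OF B i0 refl])
  also have "\<dots> = policy_value U m ?g sc_opt s0"
    by (simp add: policy_value_def Qv_Qn)
  finally have "policy_value U m ?r sc_opt s0 \<le> policy_value U m ?g sc_opt s0" .
  then show "\<forall>act sc. policy_value U m (obs_rule act) sc s0 \<le> policy_value U m ?g sc_opt s0"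
    using optimal order_trans by blast
qed
end
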